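(* The following strict inclusions hold: (1) $\mathrm{SQC}^n\subsetneq \mathrm{CN}^n\subsetneq \mathrm{QC}^n$; (2) $\mathrm{QCP}^n\subsetneq \mathrm{CN}^n$; (3) $\mathrm{CONV}^n\subsetneq \mathrm{CN}^n$.
   Context: All functions considered are $f:\mathrm{dom}(f)\to\mathbb{R}$ with $\mathrm{dom}(f)\subseteq\mathbb{R}^n$ convex. $f$ is quasiconvex if $f(z)\le\max\{f(x),f(y)\}$ for all $x,y\in\mathrm{dom}(f)$, $z\in(x,y)$; strictly quasiconvex if $f(z)<\max\{f(x),f(y)\}$ for all such $x,y,z$ (with $x\ne y$). $\mathrm{QC}^n$, $\mathrm{SQC}^n$, $\mathrm{CONV}^n$ denote the classes of quasiconvex, strictly quasiconvex, and convex functions respectively. $\mathrm{QCP}^n$ is the class of quasiconvex polynomials $\mathbb{R}^n\to\mathbb{R}$ with real coefficients and nonzero degree. A function $f$ is conic if for all $y,z\in\mathrm{dom}(f)$ and all $t\ge 0$ with $f(y)\le f(z)$ and $z+t(z-y)\in\mathrm{dom}(f)$, we have $f(z+t(z-y))\ge f(z)$; $\mathrm{CN}^n$ denotes the class of conic functions. *)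

theory Defs
  imports "HOL-Analysis.Analysis"
begin

text \<open>A function f : dom(f) \<rightarrow> R with dom(f) \<subseteq> R^n convex is represented as a pair (D, f)
  with D :: (real^'n) set convex; the values of f outside D are irrelevant.\<close>

type_synonym 'n rfun = "(real^'n) set \<times> (real^'n \<Rightarrow> real)"

definition QC :: "'n::finite rfun set" where
  "QC = {(D, f). convex D \<and>
     (\<forall>x\<in>D. \<forall>y\<in>D. \<forall>z\<in>open_segment x y. f z \<le> max (f x) (f y))}"

definition SQC :: "'n::finite rfun set" where
  "SQC = {(D, f). convex D \<and>
     (\<forall>x\<in>D. \<forall>y\<in>D. x \<noteq> y \<longrightarrow> (\<forall>z\<in>open_segment x y. f z < max (f x) (f y)))}"

definition CONV :: "'n::finite rfun set" where
  "CONV = {(D, f). convex D \<and> convex_on D f}"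

definition CN :: "'n::finite rfun set" where
  "CN = {(D, f). convex D \<and>
     (\<forall>y\<in>D. \<forall>z\<in>D. \<forall>t::real. t \<ge> 0 \<and> f y \<le> f z \<and> z + t *\<^sub>R (z - y) \<in> D
         \<longrightarrow> f (z + t *\<^sub>R (z - y)) \<ge> f z)}"

inductive_set poly_fun :: "(real^'n::finite \<Rightarrow> real) set" where
  const: "(\<lambda>x. c) \<in> poly_fun"
| coord: "(\<lambda>x. x $ i) \<in> poly_fun"
| add: "p \<in> poly_fun \<Longrightarrow> q \<in> poly_fun \<Longrightarrow> (\<lambda>x. p x + q x) \<in> poly_fun"
| mult: "p \<in> poly_fun \<Longrightarrow> q \<in> poly_fun \<Longrightarrow> (\<lambda>x. p x * q x) \<in> poly_fun"

text \<open>Quasiconvex polynomials of nonzero degree (over R, a polynomial has degree 0 or is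
  the zero polynomial iff its polynomial function is constant).\<close>

definition QCP :: "'n::finite rfun set" where
  "QCP = {(D, p). D = UNIV \<and> p \<in> poly_fun \<and> \<not> (\<exists>c. \<forall>x. p x = c) \<and> (D, p) \<in> QC}"

end

theory Submission
  imports Defs "HOL-Computational_Algebra.Polynomial"
begin

lemma comb2:
  fixes y z :: "'a::real_vector"
  shows "(1-s) *\<^sub>R y + s *\<^sub>R (z + t *\<^sub>R (z - y)) = z + (1 - s*(1+t)) *\<^sub>R (y - z)"
  by (simp add: algebra_simps)

lemma ne1:
  fixes y z :: "'a::real_vector"
  shows "(z + t *\<^sub>R (z - y)) - y = (1+t) *\<^sub>R (z - y)"
  by (simp add: algebra_simps)

lemma SQC_sub_CN: "(SQC :: 'n::finite rfun set) \<subseteq> CN"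
proof
  fix Df :: "'n rfun" assume "Df \<in> SQC"
  then obtain D f where Df: "Df = (D,f)" and cD: "convex D"
    and S: "\<forall>x\<in>D. \<forall>y\<in>D. x \<noteq> y \<longrightarrow> (\<forall>z\<in>open_segment x y. f z < max (f x) (f y))"
    unfolding SQC_def by auto
  have "f (z + t *\<^sub>R (z - y)) \<ge> f z" if "y\<in>D" "z\<in>D" "t \<ge> 0" "f y \<le> f z"
     "z + t *\<^sub>R (z - y) \<in> D" for y z t
  proof (cases "t = 0 \<or> y = z")
    case True then show ?thesis by auto
  next
    case False
    let ?w = "z + t *\<^sub>R (z - y)"
    have ne: "y \<noteq> ?w"
    proof
      assume "y = ?w"
      then have "(1+t) *\<^sub>R (z - y) = 0" using ne1[of z t y] by simp
      then show False using False \<open>t\<ge>0\<close> by simp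
    qed
    have "z \<in> open_segment y ?w"
      unfolding in_segment
    proof (intro conjI exI[of _ "1/(1+t)"])
      show "y \<noteq> ?w" by fact
      show "0 < 1/(1+t)" using \<open>t\<ge>0\<close> by simp
      show "1/(1+t) < 1" using \<open>t\<ge>0\<close> False by (simp add: field_simps)
      have "1/(1+t) * (1+t) = 1" using \<open>t\<ge>0\<close> by simp
      then have "(1 - 1/(1+t)) *\<^sub>R y + (1/(1+t)) *\<^sub>R ?w = z"
        using comb2[of "1/(1+t)" y z t] by simp
      then show "z = (1 - 1/(1+t)) *\<^sub>R y + (1/(1+t)) *\<^sub>R ?w" by simp
    qed
    then have "f z < max (f y) (f ?w)" using S that ne by blast
    then show ?thesis using that by linarith
  qed
  then show "Df \<in> CN" unfolding CN_def using Df cD by auto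
qed

lemma CN_sub_QC: "(CN :: 'n::finite rfun set) \<subseteq> QC"
proof
  fix Df :: "'n rfun" assume "Df \<in> CN"
  then obtain D f where Df: "Df = (D,f)" and cD: "convex D"
    and C: "\<forall>y\<in>D. \<forall>z\<in>D. \<forall>t::real. t \<ge> 0 \<and> f y \<le> f z \<and> z + t *\<^sub>R (z - y) \<in> D
         \<longrightarrow> f (z + t *\<^sub>R (z - y)) \<ge> f z"
    unfolding CN_def by auto
  have "f z \<le> max (f x) (f y)" if "x\<in>D" "y\<in>D" "z \<in> open_segment x y" for x y z
  proof (rule ccontr)
    assume "\<not> ?thesis"
    then have h: "f x < f z" "f y < f z" by auto
    from that(3) obtain u where u: "0<u" "u<1" "z = (1-u) *\<^sub>R x + u *\<^sub>R y"
      unfolding in_segment by auto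
    have zD: "z \<in> D" using that cD
      by (meson convex_contains_open_segment subsetD)
    have eq: "z + ((1-u)/u) *\<^sub>R (z - x) = y"
    proof -
      have zx: "z - x = u *\<^sub>R (y - x)" using u by (simp add: algebra_simps)
      have "((1-u)/u) *\<^sub>R (z - x) = (((1-u)/u) * u) *\<^sub>R (y - x)" using zx by simp
      also have "((1-u)/u) * u = 1 - u" using u by simp
      finally have e1: "((1-u)/u) *\<^sub>R (z - x) = (1-u) *\<^sub>R (y - x)" .
      have "z + (1-u) *\<^sub>R (y - x) = y" using u(3) by (simp add: algebra_simps)
      then show ?thesis using e1 by simp
    qed
    have t0: "(1-u)/u \<ge> 0" using u by simp
    have "f (z + ((1-u)/u) *\<^sub>R (z - x)) \<ge> f z"
      apply (rule C[rule_format, OF that(1) zD])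
      using t0 h eq that(2) by auto
    then show False using eq h by simp
  qed
  then show "Df \<in> QC" unfolding QC_def using Df cD by auto
qed

lemma CONV_sub_CN: "(CONV :: 'n::finite rfun set) \<subseteq> CN"
proof
  fix Df :: "'n rfun" assume "Df \<in> CONV"
  then obtain D f where Df: "Df = (D,f)" and cD: "convex D" and cf: "convex_on D f"
    unfolding CONV_def by auto
  have "f (z + t *\<^sub>R (z - y)) \<ge> f z" if "y\<in>D" "z\<in>D" "t \<ge> 0" "f y \<le> f z"
     "z + t *\<^sub>R (z - y) \<in> D" for y z t
  proof -
    let ?w = "z + t *\<^sub>R (z - y)"
    let ?s = "1/(1+t)"
    have "?s * (1+t) = 1" using \<open>t\<ge>0\<close> by simp
    then have zz: "(1 - ?s) *\<^sub>R y + ?s *\<^sub>R ?w = z" using comb2[of ?s y z t] by simp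
    have s01: "0 \<le> ?s" "?s \<le> 1" using \<open>t\<ge>0\<close> by auto
    have "f z \<le> (1 - ?s) * f y + ?s * f ?w"
      using convex_onD[OF cf, of ?s y ?w] that(1,5) s01 zz by simp
    also have "\<dots> \<le> (1 - ?s) * f z + ?s * f ?w"
      using that by (intro add_right_mono mult_left_mono) (auto simp: field_simps)
    finally have "?s * f z \<le> ?s * f ?w" by (simp add: algebra_simps)
    moreover have "?s > 0" using \<open>t\<ge>0\<close> by simp
    ultimately show ?thesis using mult_le_cancel_left_pos by blast
  qed
  then show "Df \<in> CN" unfolding CN_def using Df cD by auto
qed

lemma poly_fun_line: "p \<in> poly_fun \<Longrightarrow> \<exists>q. \<forall>s. p (a + s *\<^sub>R b) = poly q s"
proof (induction rule: poly_fun.induct)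
  case (const c) then show ?case by (intro exI[of _ "[:c:]"]) simp
next
  case (coord i) then show ?case by (intro exI[of _ "[:a$i, b$i:]"]) (simp add: algebra_simps)
next
  case (add p q)
  then obtain q1 q2 where "\<forall>s. p (a + s *\<^sub>R b) = poly q1 s" "\<forall>s. q (a + s *\<^sub>R b) = poly q2 s" by blast
  then show ?case by (intro exI[of _ "q1 + q2"]) simp
next
  case (mult p q)
  then obtain q1 q2 where "\<forall>s. p (a + s *\<^sub>R b) = poly q1 s" "\<forall>s. q (a + s *\<^sub>R b) = poly q2 s" by blast
  then show ?case by (intro exI[of _ "q1 * q2"]) simp
qed

lemma poly_const_interval:
  fixes q :: "real poly"
  assumes "\<forall>s\<in>{0..1}. poly q s = c"
  shows "poly q x = c"
proof -
  have "q - [:c:] = 0"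
  proof (rule ccontr)
    assume "q - [:c:] \<noteq> 0"
    then have "finite {x. poly (q - [:c:]) x = 0}" by (rule poly_roots_finite)
    moreover have "{0..1::real} \<subseteq> {x. poly (q - [:c:]) x = 0}" using assms by auto
    ultimately have "finite {0..1::real}" by (rule finite_subset[rotated])
    then show False using infinite_Icc[of "0::real" 1] by simp
  qed
  then have "poly (q - [:c:]) x = 0" by simp
  then show ?thesis by simp
qed

lemma line_comb:
  fixes y d :: "'a::real_vector"
  shows "(1-a) *\<^sub>R (y + u *\<^sub>R d) + a *\<^sub>R (y + w *\<^sub>R d) = y + ((1-a)*u + a*w) *\<^sub>R d"
  by (simp add: algebra_simps)

lemma lin1:
  fixes y z :: "'a::real_vector"
  shows "y + (1+t) *\<^sub>R (z - y) = z + t *\<^sub>R (z - y)"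
  by (simp add: algebra_simps)

lemma QCP_sub_CN: "(QCP :: 'n::finite rfun set) \<subseteq> CN"
proof
  fix Df :: "'n rfun" assume "Df \<in> QCP"
  then obtain p where Df: "Df = (UNIV,p)" and pp: "p \<in> poly_fun"
    and Q: "\<forall>x y z. z\<in>open_segment x y \<longrightarrow> p z \<le> max (p x) (p y)"
    unfolding QCP_def QC_def by auto
  have "p (z + t *\<^sub>R (z - y)) \<ge> p z" if "t \<ge> 0" "p y \<le> p z" for y z t
  proof (rule ccontr)
    assume neg: "\<not> ?thesis"
    obtain q where q: "\<forall>s. p (y + s *\<^sub>R (z - y)) = poly q s"
      using poly_fun_line[OF pp] by blast
    define g where "g = poly q"
    have g: "\<And>s. p (y + s *\<^sub>R (z - y)) = g s" using q g_def by simp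
    have g0: "g 0 = p y" using g[of 0] by simp
    have g1: "g 1 = p z" using g[of 1] by simp
    have gt: "g (1+t) = p (z + t *\<^sub>R (z - y))" using g[of "1+t"] lin1[of y t z] by simp
    have tpos: "t > 0" using neg that by (cases "t = 0") auto
    have yz: "y \<noteq> z" using neg by auto
    have gq: "g v \<le> max (g u) (g w)" if "u < v" "v < w" for u v w
    proof -
      let ?L = "\<lambda>s. y + s *\<^sub>R (z - y)"
      have Lne: "?L u \<noteq> ?L w" using yz that by (auto simp: scaleR_cancel_right)
      have Lv: "?L v = (1 - (v-u)/(w-u)) *\<^sub>R ?L u + ((v-u)/(w-u)) *\<^sub>R ?L w"
      proof -
        have d: "(v-u)/(w-u) * (w-u) = v-u" using that by simp
        have "(1 - a) * u + a * w = u + a * (w-u)" for a :: real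
          by (simp add: algebra_simps)
        then have "(1 - (v-u)/(w-u)) * u + ((v-u)/(w-u)) * w = u + (v-u)/(w-u) * (w-u)"
          by blast
        then have "(1 - (v-u)/(w-u)) * u + ((v-u)/(w-u)) * w = v" using d by simp
        then show ?thesis using line_comb[of "(v-u)/(w-u)" y u "z-y" w] by simp
      qed
      have a01: "0 < (v-u)/(w-u)" "(v-u)/(w-u) < 1" using that by auto
      have "?L v \<in> open_segment (?L u) (?L w)" unfolding in_segment(2)
        using Lne Lv a01 by blast
      then have "p (?L v) \<le> max (p (?L u)) (p (?L w))" by (rule Q[rule_format])
      then show ?thesis by (simp only: g)
    qed
    have lt: "g (1+t) < g 1" using neg gt g1 by simp
    have "g 1 \<le> max (g 0) (g (1+t))" using gq[of 0 1 "1+t"] tpos by simp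
    then have "g 1 \<le> g 0 \<or> g 1 \<le> g (1+t)" by (simp only: le_max_iff_disj)
    then have "g 1 \<le> g 0" using lt by linarith
    then have e: "g 0 = g 1" using g0 g1 that(2) by linarith
    have "\<forall>s\<in>{0..1}. g s = g 1"
    proof
      fix s :: real assume s: "s \<in> {0..1}"
      show "g s = g 1"
      proof (cases "s = 0 \<or> s = 1")
        case True then show ?thesis using e by auto
      next
        case False
        then have "0 < s" "s < 1" using s by auto
        then have h1: "g s \<le> max (g 0) (g 1)" and h2: "g 1 \<le> max (g s) (g (1+t))"
          using gq[of 0 s 1] gq[of s 1 "1+t"] tpos by simp_all
        from h1 e have "g s \<le> g 1" by simp
        moreover from h2 have "g 1 \<le> g s \<or> g 1 \<le> g (1+t)" by (simp only: le_max_iff_disj)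
        ultimately show ?thesis using lt by linarith
      qed
    qed
    then have "\<forall>s\<in>{0..1}. poly q s = g 1" by (simp only: g_def)
    then have "poly q (1+t) = g 1" by (rule poly_const_interval)
    then have "g (1+t) = g 1" by (simp only: g_def)
    then show False using lt by simp
  qed
  then show "Df \<in> CN" unfolding CN_def using Df by auto
qed

lemma const_CN: "((UNIV, \<lambda>x. 0) :: 'n::finite rfun) \<in> CN"
  unfolding CN_def by auto

lemma const_not_SQC: "((UNIV, \<lambda>x. 0) :: 'n::finite rfun) \<notin> SQC"
proof
  assume "((UNIV, \<lambda>x. 0) :: 'n::finite rfun) \<in> SQC"
  then have S: "\<forall>x y::real^'n. x \<noteq> y \<longrightarrow> (\<forall>z\<in>open_segment x y. (0::real) < 0)"
    unfolding SQC_def by auto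
  have "(0::real^'n) \<noteq> 1" by (simp add: vec_eq_iff)
  then have "midpoint 0 (1::real^'n) \<in> open_segment 0 1"
    by (simp add: midpoint_in_open_segment)
  then show False using S \<open>(0::real^'n) \<noteq> 1\<close> by blast
qed

lemma const_not_QCP: "((UNIV, \<lambda>x. 0) :: 'n::finite rfun) \<notin> QCP"
  unfolding QCP_def by auto

definition stepf :: "real^'n::finite \<Rightarrow> real" where
  "stepf x = (if x $ (SOME i. True) > 0 then 1 else 0)"

lemma step_QC: "((UNIV, stepf) :: 'n::finite rfun) \<in> QC"
proof -
  have "stepf z \<le> max (stepf x) (stepf y)" if "z \<in> open_segment x y" for x y z :: "real^'n"
  proof -
    let ?i = "SOME i::'n. True"
    from that obtain u where u: "0<u" "u<1" "z = (1-u) *\<^sub>R x + u *\<^sub>R y"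
      unfolding in_segment by auto
    have zi: "z $ ?i = (1-u) * x $ ?i + u * y $ ?i" using u by simp
    show ?thesis
    proof (cases "z $ ?i > 0")
      case True
      have "x $ ?i > 0 \<or> y $ ?i > 0"
      proof (rule ccontr)
        assume "\<not> ?thesis"
        then have "(1-u) * x $ ?i \<le> 0" "u * y $ ?i \<le> 0" using u
          by (auto simp: mult_nonneg_nonpos)
        then show False using True zi by linarith
      qed
      then show ?thesis unfolding stepf_def by auto
    qed (auto simp: stepf_def)
  qed
  then show ?thesis unfolding QC_def by auto
qed

lemma step_not_CN: "((UNIV, stepf) :: 'n::finite rfun) \<notin> CN"
proof
  assume "((UNIV, stepf) :: 'n::finite rfun) \<in> CN"
  then have C: "\<forall>y z::real^'n. \<forall>t::real. t \<ge> 0 \<and> stepf y \<le> stepf z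
         \<longrightarrow> stepf (z + t *\<^sub>R (z - y)) \<ge> stepf z" unfolding CN_def by auto
  have "stepf ((\<chi> j. 1) + 2 *\<^sub>R ((\<chi> j. 1) - (\<chi> j. 2)) :: real^'n) \<ge> stepf (\<chi> j. 1 :: real^'n)"
    using C[rule_format, of 2 "\<chi> j. 2" "\<chi> j. 1"] by (simp add: stepf_def)
  then show False by (simp add: stepf_def)
qed

definition cubef :: "real^'n::finite \<Rightarrow> real" where
  "cubef x = (x $ (SOME i. True)) ^ 3"

lemma cube_CN: "((UNIV, cubef) :: 'n::finite rfun) \<in> CN"
proof -
  have "cubef (z + t *\<^sub>R (z - y)) \<ge> cubef z" if "t \<ge> 0" "cubef y \<le> cubef z" for y z :: "real^'n" and t
  proof -
    let ?i = "SOME i::'n. True"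
    have "root 3 ((y $ ?i)^3) \<le> root 3 ((z $ ?i)^3)" using that(2) unfolding cubef_def
      by simp
    then have "y $ ?i \<le> z $ ?i" by (simp add: odd_real_root_power_cancel)
    then have "z $ ?i \<le> z $ ?i + t * (z $ ?i - y $ ?i)" using that(1) by simp
    then show ?thesis unfolding cubef_def
      by (intro power_mono_odd) auto
  qed
  then show ?thesis unfolding CN_def by auto
qed

lemma cube_not_CONV: "((UNIV, cubef) :: 'n::finite rfun) \<notin> CONV"
proof
  assume "((UNIV, cubef) :: 'n::finite rfun) \<in> CONV"
  then have cf: "convex_on UNIV (cubef :: real^'n \<Rightarrow> real)" unfolding CONV_def by auto
  have "cubef ((1 - 1/2) *\<^sub>R (\<chi> j. -2) + (1/2) *\<^sub>R (0::real^'n))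
        \<le> (1 - 1/2) * cubef (\<chi> j. -2 :: real^'n) + (1/2) * cubef (0::real^'n)"
    by (rule convex_onD[OF cf]) auto
  then show False by (simp add: cubef_def)
qed

theorem mainTheorem2:
  shows "(SQC :: 'n::finite rfun set) \<subset> CN \<and> (CN :: 'n::finite rfun set) \<subset> QC
       \<and> (QCP :: 'n::finite rfun set) \<subset> CN
       \<and> (CONV :: 'n::finite rfun set) \<subset> CN"
proof (intro conjI psubsetI SQC_sub_CN CN_sub_QC QCP_sub_CN CONV_sub_CN)
  show "(SQC :: 'n::finite rfun set) \<noteq> CN" using const_CN const_not_SQC by metis
  show "(CN :: 'n::finite rfun set) \<noteq> QC" using step_QC step_not_CN by metis
  show "(QCP :: 'n::finite rfun set) \<noteq> CN" using const_CN const_not_QCP by metis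
  show "(CONV :: 'n::finite rfun set) \<noteq> CN" using cube_CN cube_not_CONV by metis
qed

end
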